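(* Let $G$ be a Garside group with Garside element $\Delta$, and let $H$ be an abelian subgroup of $G$ all of whose elements are periodic. Then the restriction $\mathrm{INF}|_H: H\to\mathbb Q$ is an injective group homomorphism. In particular, $H$ is cyclic.
   Context: $G$ is a Garside group: the group of fractions of a Garside monoid $G^+$ (an atomic, left and right cancellative monoid that is a lattice under both the prefix order and the suffix order, with a Garside element $\Delta$ whose left and right divisors coincide, form a finite set, and generate $G^+$); some positive power of $\Delta$ is central. For $g,h\in G$, $g\le_L h$ means $g^{-1}h\in G^+$; $\inf(g)=\max\{r\in\mathbb Z:\Delta^r\le_L g\}$ and $\mathrm{INF}(g)=\lim_{n\to\infty}\inf(g^n)/n$ (this limit exists and is rational). An element $g$ is periodic if $g=1$ or $g^k$ is conjugate to $\Delta^\ell$ for some nonzero integers $k,\ell$. *)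

theory Defs
  imports Complex_Main "HOL-Algebra.Generated_Groups"
begin

definition lprefix :: "('a, 'b) monoid_scheme \<Rightarrow> 'a set \<Rightarrow> 'a \<Rightarrow> 'a \<Rightarrow> bool" where
  "lprefix G P a b \<longleftrightarrow> (\<exists>c\<in>P. b = a \<otimes>\<^bsub>G\<^esub> c)"

definition rsuffix :: "('a, 'b) monoid_scheme \<Rightarrow> 'a set \<Rightarrow> 'a \<Rightarrow> 'a \<Rightarrow> bool" where
  "rsuffix G P a b \<longleftrightarrow> (\<exists>c\<in>P. b = c \<otimes>\<^bsub>G\<^esub> a)"

definition is_lattice_on :: "'a set \<Rightarrow> ('a \<Rightarrow> 'a \<Rightarrow> bool) \<Rightarrow> bool" where
  "is_lattice_on P rel \<longleftrightarrow>
     (\<forall>a\<in>P. \<forall>b\<in>P.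
        (\<exists>m\<in>P. rel m a \<and> rel m b \<and> (\<forall>c\<in>P. rel c a \<and> rel c b \<longrightarrow> rel c m)) \<and>
        (\<exists>j\<in>P. rel a j \<and> rel b j \<and> (\<forall>c\<in>P. rel a c \<and> rel b c \<longrightarrow> rel j c)))"

definition garside_group :: "('a, 'b) monoid_scheme \<Rightarrow> 'a set \<Rightarrow> 'a \<Rightarrow> bool" where
  "garside_group G P D \<longleftrightarrow>
     group G \<and> P \<subseteq> carrier G \<and>
     \<one>\<^bsub>G\<^esub> \<in> P \<and> (\<forall>a\<in>P. \<forall>b\<in>P. a \<otimes>\<^bsub>G\<^esub> b \<in> P) \<and>
     \<comment> \<open>G is the group of fractions of P (P embeds in G and generates it)\<close>
     carrier G = generate G P \<and>
     \<comment> \<open>atomicity\<close>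
     (\<exists>\<nu>::'a \<Rightarrow> nat. (\<forall>a\<in>P. a \<noteq> \<one>\<^bsub>G\<^esub> \<longrightarrow> \<nu> a > 0) \<and>
        (\<forall>a\<in>P. \<forall>b\<in>P. \<nu> (a \<otimes>\<^bsub>G\<^esub> b) \<ge> \<nu> a + \<nu> b)) \<and>
     \<comment> \<open>lattice for prefix and suffix orders\<close>
     is_lattice_on P (lprefix G P) \<and> is_lattice_on P (rsuffix G P) \<and>
     \<comment> \<open>Garside element\<close>
     D \<in> P \<and>
     {a\<in>P. lprefix G P a D} = {a\<in>P. rsuffix G P a D} \<and>
     finite {a\<in>P. lprefix G P a D} \<and>
     (\<forall>x\<in>P. \<exists>xs. set xs \<subseteq> {a\<in>P. lprefix G P a D} \<and> x = foldr (\<otimes>\<^bsub>G\<^esub>) xs \<one>\<^bsub>G\<^esub>)"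

definition leL :: "('a, 'b) monoid_scheme \<Rightarrow> 'a set \<Rightarrow> 'a \<Rightarrow> 'a \<Rightarrow> bool" where
  "leL G P g h \<longleftrightarrow> inv\<^bsub>G\<^esub> g \<otimes>\<^bsub>G\<^esub> h \<in> P"

definition ginf :: "('a, 'b) monoid_scheme \<Rightarrow> 'a set \<Rightarrow> 'a \<Rightarrow> 'a \<Rightarrow> int" where
  "ginf G P D g = (GREATEST r::int. leL G P (D [^]\<^bsub>G\<^esub> r) g)"

definition gINF :: "('a, 'b) monoid_scheme \<Rightarrow> 'a set \<Rightarrow> 'a \<Rightarrow> 'a \<Rightarrow> real" where
  "gINF G P D g = lim (\<lambda>n::nat. real_of_int (ginf G P D (g [^]\<^bsub>G\<^esub> n)) / real n)"

definition periodic :: "('a, 'b) monoid_scheme \<Rightarrow> 'a \<Rightarrow> 'a \<Rightarrow> bool" where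
  "periodic G D g \<longleftrightarrow> g = \<one>\<^bsub>G\<^esub> \<or>
     (\<exists>k::int. \<exists>l::int. k \<noteq> 0 \<and> l \<noteq> 0 \<and>
        (\<exists>x\<in>carrier G. g [^]\<^bsub>G\<^esub> k = x \<otimes>\<^bsub>G\<^esub> (D [^]\<^bsub>G\<^esub> l) \<otimes>\<^bsub>G\<^esub> inv\<^bsub>G\<^esub> x))"

end

theory Submission imports Defs begin

lemma (in group) cyclic_of_int_hom:
  fixes \<phi> :: "'a \<Rightarrow> int"
  assumes sub: "subgroup H G" and hom: "\<And>a b. a \<in> H \<Longrightarrow> b \<in> H \<Longrightarrow> \<phi> (a \<otimes> b) = \<phi> a + \<phi> b"
    and inj: "inj_on \<phi> H"
  shows "\<exists>h\<in>H. H = generate G {h}"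
proof -
  have HG: "H \<subseteq> carrier G" by (rule subgroup.subset[OF sub])
  have oneH: "\<one> \<in> H" by (rule subgroup.one_closed[OF sub])
  have invH: "h \<in> H \<Longrightarrow> inv h \<in> H" for h by (rule subgroup.m_inv_closed[OF sub])
  have mH: "a \<in> H \<Longrightarrow> b \<in> H \<Longrightarrow> a \<otimes> b \<in> H" for a b by (rule subgroup.m_closed[OF sub])
  have powH: "h \<in> H \<Longrightarrow> h [^] (k::int) \<in> H" for h k by (rule subgroup_int_pow_closed[OF sub])
  have \<phi>1: "\<phi> \<one> = 0" using hom[OF oneH oneH] by simp
  have \<phi>inv: "\<phi> (inv h) = - \<phi> h" if h: "h \<in> H" for h
  proof -
    have 1: "\<phi> (h \<otimes> inv h) = \<phi> h + \<phi> (inv h)" by (rule hom[OF h invH[OF h]])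
    have "h \<in> carrier G" using h HG by blast
    then have "h \<otimes> inv h = \<one>" by (rule r_inv)
    then show ?thesis using 1 \<phi>1 by simp
  qed
  have \<phi>pow: "\<phi> (h [^] (n::nat)) = int n * \<phi> h" if h: "h \<in> H" for h n
  proof (induction n)
    case 0 then show ?case using \<phi>1 by simp
  next
    case (Suc n)
    have hn: "h [^] n \<in> H" using powH[OF h, of "int n"] by (simp only: int_pow_int)
    have "h [^] Suc n = h [^] n \<otimes> h" by (rule nat_pow_Suc)
    then have "\<phi> (h [^] Suc n) = \<phi> (h [^] n) + \<phi> h" using hom[OF hn h] by simp
    then show ?case using Suc by (simp add: algebra_simps)
  qed
  have \<phi>ipow: "\<phi> (h [^] (k::int)) = k * \<phi> h" if h: "h \<in> H" for h k
  proof (cases "k \<ge> 0")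
    case True
    then have "h [^] k = h [^] nat k" by (simp add: pow_nat)
    then show ?thesis using \<phi>pow[OF h, of "nat k"] True by simp
  next
    case False
    have hG: "h \<in> carrier G" using h HG by auto
    have "h [^] k = inv (h [^] nat (-k))" using False int_pow_neg[OF hG, of "-k"] pow_nat[where i="-k" and x=h and G=G] by simp
    moreover have "h [^] nat (-k) \<in> H" using powH[OF h, of "int (nat (-k))"] by (simp only: int_pow_int)
    ultimately show ?thesis using \<phi>inv \<phi>pow[OF h, of "nat (-k)"] False by simp
  qed
  show ?thesis
  proof (cases "\<forall>h\<in>H. \<phi> h = 0")
    case True
    have "h = \<one>" if h: "h \<in> H" for h
      using inj_onD[OF inj _ h oneH] True h \<phi>1 by simp
    then have "H = {\<one>}" using oneH by blast
    moreover have "generate G {\<one>} = {\<one>}" using generate_pow[of \<one>] by simp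
    ultimately show ?thesis using oneH by blast
  next
    case False
    then obtain g where g: "g \<in> H" "\<phi> g \<noteq> 0" by blast
    have "\<exists>h\<in>H. \<phi> h > 0"
    proof (cases "\<phi> g > 0")
      case True then show ?thesis using g by blast
    next
      case False then show ?thesis using g \<phi>inv invH by (intro bexI[of _ "inv g"]) auto
    qed
    then have ex: "\<exists>n::nat. n > 0 \<and> (\<exists>h\<in>H. \<phi> h = int n)"
      by (metis of_nat_0_less_iff zero_less_imp_eq_int)
    define n0 where "n0 = (LEAST n::nat. n > 0 \<and> (\<exists>h\<in>H. \<phi> h = int n))"
    have n0: "n0 > 0 \<and> (\<exists>h\<in>H. \<phi> h = int n0)" using LeastI_ex[OF ex] by (simp add: n0_def)
    then obtain h0 where h0: "h0 \<in> H" "\<phi> h0 = int n0" by blast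
    have h0G: "h0 \<in> carrier G" using h0 HG by auto
    have "H \<subseteq> generate G {h0}"
    proof
      fix x assume x: "x \<in> H"
      define q where "q = \<phi> x div int n0"
      define r where "r = \<phi> x mod int n0"
      define w where "w = x \<otimes> h0 [^] (-q)"
      have wH: "w \<in> H" using x h0 powH mH by (simp add: w_def)
      have "\<phi> w = \<phi> x + (-q) * int n0" using hom[OF x powH[OF h0(1)]] \<phi>ipow[OF h0(1)] h0 by (simp add: w_def)
      also have "\<dots> = r"
      proof -
        have "\<phi> x = q * int n0 + r" unfolding q_def r_def by simp
        then show ?thesis by simp
      qed
      finally have \<phi>w: "\<phi> w = r" .
      have r0: "r \<ge> 0" "r < int n0" using n0 by (auto simp: r_def)
      have "r = 0"
      proof (rule ccontr)
        assume "r \<noteq> 0"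
        then have "nat r > 0 \<and> (\<exists>h\<in>H. \<phi> h = int (nat r))" using \<phi>w wH r0 by auto
        then have "n0 \<le> nat r" unfolding n0_def by (rule Least_le)
        then show False using r0 by simp
      qed
      then have "w = \<one>" using inj_onD[OF inj _ wH oneH] \<phi>w \<phi>1 by simp
      have xG: "x \<in> carrier G" using x HG by auto
      define y where "y = h0 [^] q"
      have yG: "y \<in> carrier G" using h0G by (simp add: y_def)
      have "x \<otimes> inv y = \<one>" using \<open>w = \<one>\<close> int_pow_neg[OF h0G, of q] by (simp add: w_def y_def)
      then have "inv (inv y) = x" using xG yG by (intro inv_equality) auto
      then have "x = h0 [^] q" using yG by (simp add: y_def)
      then show "x \<in> generate G {h0}" using generate_pow[OF h0G] by blast
    qed
    moreover have "generate G {h0} \<subseteq> H"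
    proof
      fix y assume "y \<in> generate G {h0}"
      then obtain k :: int where "y = h0 [^] k" using generate_pow[OF h0G] by blast
      then show "y \<in> H" using powH[OF h0(1)] by simp
    qed
    ultimately show ?thesis using h0 by blast
  qed
qed

locale gar = group G for G (structure) +
  fixes P D and \<nu> :: "'a \<Rightarrow> nat"
  assumes PG: "P \<subseteq> carrier G" and one_P: "\<one> \<in> P"
    and mult_P: "a \<in> P \<Longrightarrow> b \<in> P \<Longrightarrow> a \<otimes> b \<in> P"
    and gen: "carrier G = generate G P"
    and nu_pos: "a \<in> P \<Longrightarrow> a \<noteq> \<one> \<Longrightarrow> \<nu> a > 0"
    and nu_add: "a \<in> P \<Longrightarrow> b \<in> P \<Longrightarrow> \<nu> (a \<otimes> b) \<ge> \<nu> a + \<nu> b"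
    and lat: "is_lattice_on P (lprefix G P)"
    and D_P: "D \<in> P"
    and S_eq: "{a\<in>P. lprefix G P a D} = {a\<in>P. rsuffix G P a D}"
    and S_fin: "finite {a\<in>P. lprefix G P a D}"
    and S_gen: "\<forall>x\<in>P. \<exists>xs. set xs \<subseteq> {a\<in>P. lprefix G P a D} \<and> x = foldr (\<otimes>) xs \<one>"
begin

definition "S = {a\<in>P. lprefix G P a D}"

lemma inv_cancel_l[simp]: "x \<in> carrier G \<Longrightarrow> y \<in> carrier G \<Longrightarrow> inv x \<otimes> (x \<otimes> y) = y"
  by (simp add: m_assoc[symmetric])
lemma inv_cancel_r[simp]: "x \<in> carrier G \<Longrightarrow> y \<in> carrier G \<Longrightarrow> x \<otimes> (inv x \<otimes> y) = y"
  by (simp add: m_assoc[symmetric])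

lemma PGi[simp]: "a \<in> P \<Longrightarrow> a \<in> carrier G" using PG by auto

lemma S_P: "s \<in> S \<Longrightarrow> s \<in> P" by (simp add: S_def)

lemma nu_one: "\<nu> \<one> = 0"
  using nu_add[OF one_P one_P] by simp

lemma pos_unit: assumes "a \<in> P" "b \<in> P" "a \<otimes> b = \<one>" shows "a = \<one>"
proof (rule ccontr)
  assume "a \<noteq> \<one>"
  then have "\<nu> a > 0" using nu_pos assms by auto
  moreover have "\<nu> (a \<otimes> b) \<ge> \<nu> a + \<nu> b" using nu_add[OF assms(1,2)] .
  ultimately show False using assms(3) nu_one by simp
qed

lemma leL_iff: "leL G P g h \<longleftrightarrow> inv g \<otimes> h \<in> P" by (simp add: leL_def)

lemma leL_refl: "g \<in> carrier G \<Longrightarrow> leL G P g g" by (simp add: leL_def one_P)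

lemma leL_trans: assumes "g \<in> carrier G" "h \<in> carrier G" "k \<in> carrier G"
  "leL G P g h" "leL G P h k" shows "leL G P g k"
proof -
  have "inv g \<otimes> k = (inv g \<otimes> h) \<otimes> (inv h \<otimes> k)" using assms
    by (simp add: m_assoc[symmetric]) (simp add: m_assoc)
  then show ?thesis using assms mult_P by (simp add: leL_def)
qed

lemma leL_antisym: assumes "g \<in> carrier G" "h \<in> carrier G"
  "leL G P g h" "leL G P h g" shows "g = h"
proof -
  have "(inv g \<otimes> h) \<otimes> (inv h \<otimes> g) = \<one>" using assms
    by (simp add: m_assoc[symmetric]) (simp add: m_assoc)
  then have "inv g \<otimes> h = \<one>" using pos_unit assms by (auto simp: leL_def)
  then show ?thesis using assms by (metis inv_equality inv_inv l_inv_ex r_inv)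
qed

lemma leL_left: assumes "c \<in> carrier G" "g \<in> carrier G" "h \<in> carrier G"
  shows "leL G P (c \<otimes> g) (c \<otimes> h) \<longleftrightarrow> leL G P g h"
proof -
  have "inv (c \<otimes> g) \<otimes> (c \<otimes> h) = inv g \<otimes> h" using assms
    by (simp add: inv_mult_group m_assoc[symmetric]) (simp add: m_assoc)
  then show ?thesis by (simp add: leL_def)
qed

lemma simple_conj: assumes "s \<in> S" shows "inv D \<otimes> s \<otimes> D \<in> S"
proof -
  have DG: "D \<in> carrier G" using D_P by simp
  from assms obtain t where t: "t \<in> P" "D = s \<otimes> t" by (auto simp: S_def lprefix_def)
  have "rsuffix G P t D" using t assms S_P by (auto simp: rsuffix_def)
  then have "t \<in> S" unfolding S_def using S_eq t(1) by blast
  then obtain u where u: "u \<in> P" "D = t \<otimes> u" by (auto simp: S_def lprefix_def)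
  have "rsuffix G P u D" using u t by (auto simp: rsuffix_def)
  then have uS: "u \<in> S" unfolding S_def using S_eq u(1) by blast
  have "s \<otimes> D = D \<otimes> u" using t u assms S_P by (simp add: m_assoc)
  then have "inv D \<otimes> s \<otimes> D = u" using DG u assms S_P
    by (metis PGi inv_solve_left m_assoc m_closed inv_closed)
  then show ?thesis using uS by simp
qed


lemma DG[simp]: "D \<in> carrier G" using D_P by simp
lemma S_G[simp]: "s \<in> S \<Longrightarrow> s \<in> carrier G" using S_P by simp

lemma conj_pow: assumes "s \<in> S" shows "inv (D [^] (i::nat)) \<otimes> s \<otimes> D [^] i \<in> S"
proof (induction i)
  case 0 then show ?case using assms by simp
next
  case (Suc i)
  have "inv (D [^] Suc i) \<otimes> s \<otimes> D [^] Suc i = inv D \<otimes> (inv (D [^] i) \<otimes> s \<otimes> D [^] i) \<otimes> D"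
    using assms by (simp add: inv_mult_group m_assoc)
  then show ?case using simple_conj[OF Suc] by simp
qed

lemma comm_foldr: assumes "z \<in> carrier G" "set xs \<subseteq> A" "A \<subseteq> carrier G"
  "\<And>s. s \<in> A \<Longrightarrow> z \<otimes> s = s \<otimes> z"
  shows "z \<otimes> foldr (\<otimes>) xs \<one> = foldr (\<otimes>) xs \<one> \<otimes> z \<and> foldr (\<otimes>) xs \<one> \<in> carrier G"
  using assms(2)
proof (induction xs)
  case Nil then show ?case using assms by simp
next
  case (Cons a xs)
  then have a: "a \<in> A" "a \<in> carrier G" and IH: "z \<otimes> foldr (\<otimes>) xs \<one> = foldr (\<otimes>) xs \<one> \<otimes> z"
     "foldr (\<otimes>) xs \<one> \<in> carrier G" using assms by auto
  have za: "z \<otimes> a = a \<otimes> z" using assms(4) a by simp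
  have "z \<otimes> (a \<otimes> foldr (\<otimes>) xs \<one>) = (z \<otimes> a) \<otimes> foldr (\<otimes>) xs \<one>" by (rule m_assoc[symmetric]) (use a IH assms in auto)
  also have "\<dots> = (a \<otimes> z) \<otimes> foldr (\<otimes>) xs \<one>" using za by simp
  also have "\<dots> = a \<otimes> (z \<otimes> foldr (\<otimes>) xs \<one>)" by (rule m_assoc) (use a IH assms in auto)
  also have "\<dots> = a \<otimes> (foldr (\<otimes>) xs \<one> \<otimes> z)" using IH by simp
  also have "\<dots> = (a \<otimes> foldr (\<otimes>) xs \<one>) \<otimes> z" by (rule m_assoc[symmetric]) (use a IH assms in auto)
  finally show ?case using a IH by simp
qed

lemma comm_generate: assumes "z \<in> carrier G" "A \<subseteq> carrier G"
  "\<And>s. s \<in> A \<Longrightarrow> z \<otimes> s = s \<otimes> z" "g \<in> generate G A"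
  shows "z \<otimes> g = g \<otimes> z"
  using assms(4)
proof (induction g rule: generate.induct)
  case one then show ?case using assms by simp
next
  case (incl h) then show ?case using assms by simp
next
  case (inv h)
  then have h: "h \<in> carrier G" using assms by auto
  have zh: "z \<otimes> h = h \<otimes> z" using assms(3) inv by simp
  have "z \<otimes> inv h = inv h \<otimes> (h \<otimes> z) \<otimes> inv h" using h assms(1) by (simp add: m_assoc[symmetric])
  also have "\<dots> = inv h \<otimes> (z \<otimes> h) \<otimes> inv h" using zh by simp
  also have "\<dots> = inv h \<otimes> z" using h assms(1) by (simp add: m_assoc)
  finally show ?case .
next
  case (eng h1 h2)
  have c: "h1 \<in> carrier G" "h2 \<in> carrier G" using eng generate_in_carrier assms by auto
  have "z \<otimes> (h1 \<otimes> h2) = (h1 \<otimes> z) \<otimes> h2" using eng c assms by (simp add: m_assoc[symmetric])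
  also have "\<dots> = h1 \<otimes> h2 \<otimes> z" using eng c assms by (simp add: m_assoc)
  finally show ?case .
qed

lemma central_exists: "\<exists>e::nat. e > 0 \<and> (\<forall>g\<in>carrier G. D [^] e \<otimes> g = g \<otimes> D [^] e)"
proof -
  define f where "f i = restrict (\<lambda>s. inv (D [^] (i::nat)) \<otimes> s \<otimes> D [^] i) S" for i
  have "range f \<subseteq> S \<rightarrow>\<^sub>E S" using conj_pow by (auto simp: f_def)
  moreover have "finite (S \<rightarrow>\<^sub>E S)" using S_fin by (simp add: S_def finite_PiE)
  ultimately have "finite (range f)" by (rule finite_subset)
  then have "\<not> inj f" using finite_imageD infinite_UNIV_nat by blast
  then obtain i j where ij: "i \<noteq> j" "f i = f j" unfolding inj_def by blast
  have "\<exists>i j. i < j \<and> f i = f j" using ij by (metis nat_neq_iff)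
  then obtain i j where ij: "i < j" "f i = f j" by blast
  define d where "d = j - i"
  have dpos: "d > 0" using ij by (simp add: d_def)
  have Dj: "D [^] j = D [^] d \<otimes> D [^] i" using ij by (simp add: d_def nat_pow_mult)
  have comS: "D [^] d \<otimes> s = s \<otimes> D [^] d" if s: "s \<in> S" for s
  proof -
    have "inv (D [^] i) \<otimes> s \<otimes> D [^] i = inv (D [^] j) \<otimes> s \<otimes> D [^] j"
      using fun_cong[OF ij(2), of s] s by (simp add: f_def)
    also have "\<dots> = inv (D [^] i) \<otimes> (inv (D [^] d) \<otimes> s \<otimes> D [^] d) \<otimes> D [^] i"
      using s by (simp add: Dj inv_mult_group m_assoc)
    finally have "s = inv (D [^] d) \<otimes> s \<otimes> D [^] d" using s by simp
    then have "D [^] d \<otimes> s = D [^] d \<otimes> (inv (D [^] d) \<otimes> s \<otimes> D [^] d)" by simp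
    also have "\<dots> = s \<otimes> D [^] d" using s by (simp add: m_assoc[symmetric])
    finally show ?thesis .
  qed
  have comP: "D [^] d \<otimes> p = p \<otimes> D [^] d" if p: "p \<in> P" for p
  proof -
    obtain xs where xs: "set xs \<subseteq> S" "p = foldr (\<otimes>) xs \<one>" using S_gen p by (auto simp: S_def)
    have "S \<subseteq> carrier G" by auto
    then show ?thesis using comm_foldr[of "D [^] d" xs S] xs comS by auto
  qed
  have "\<forall>g\<in>carrier G. D [^] d \<otimes> g = g \<otimes> D [^] d"
  proof
    fix g assume "g \<in> carrier G"
    then have "g \<in> generate G P" using gen by simp
    then show "D [^] d \<otimes> g = g \<otimes> D [^] d" using comm_generate[of "D [^] d" P] comP PG by simp
  qed
  then show ?thesis using dpos by blast
qed


lemma foldr_G: "set xs \<subseteq> S \<Longrightarrow> foldr (\<otimes>) xs \<one> \<in> carrier G"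
  by (induction xs) auto

lemma pow_P: "x \<in> P \<Longrightarrow> x [^] (n::nat) \<in> P"
  by (induction n) (auto simp: one_P mult_P)

lemma lprefix_leL: "a \<in> carrier G \<Longrightarrow> c \<in> carrier G \<Longrightarrow> lprefix G P a c \<longleftrightarrow> leL G P a c"
proof
  assume a: "a \<in> carrier G" "c \<in> carrier G" "lprefix G P a c"
  then obtain d where "d \<in> P" "c = a \<otimes> d" by (auto simp: lprefix_def)
  then show "leL G P a c" using a by (simp add: leL_def m_assoc[symmetric])
next
  assume a: "a \<in> carrier G" "c \<in> carrier G" "leL G P a c"
  then have "inv a \<otimes> c \<in> P" "c = a \<otimes> (inv a \<otimes> c)" by (auto simp: leL_def m_assoc[symmetric])
  then show "lprefix G P a c" by (auto simp: lprefix_def)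
qed

lemma comm_int_pow: assumes "x \<in> carrier G" "g \<in> carrier G" "x \<otimes> g = g \<otimes> x"
  shows "x [^] (k::int) \<otimes> g = g \<otimes> x [^] k"
proof (cases "k \<ge> 0")
  case True
  then have "x [^] k = x [^] nat k" by (simp add: pow_nat)
  then show ?thesis using group_commutes_pow[OF assms(3,1,2)] by simp
next
  case False
  then have k: "x [^] k = inv (x [^] nat (-k))" using assms by (metis int_pow_neg minus_minus pow_nat neg_0_le_iff_le nle_le)
  have c: "x [^] nat (-k) \<otimes> g = g \<otimes> x [^] nat (-k)" using group_commutes_pow[OF assms(3,1,2)] by simp
  define y where "y = x [^] nat (-k)"
  have y: "y \<in> carrier G" using assms by (simp add: y_def)
  have c': "y \<otimes> g = g \<otimes> y" using c y_def by simp
  have "inv y \<otimes> g = inv y \<otimes> (g \<otimes> y) \<otimes> inv y" using y assms by (simp add: m_assoc)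
  also have "\<dots> = inv y \<otimes> (y \<otimes> g) \<otimes> inv y" using c' by simp
  also have "\<dots> = g \<otimes> inv y" using y assms by (simp add: m_assoc[symmetric])
  finally show ?thesis using k y_def by simp
qed

lemma nu_Dpow: assumes "D \<noteq> \<one>" shows "\<nu> (D [^] (k::nat)) \<ge> k"
proof (induction k)
  case 0 then show ?case by simp
next
  case (Suc k)
  have "\<nu> (D [^] Suc k) \<ge> \<nu> (D [^] k) + \<nu> D" using nu_add[OF pow_P[OF D_P] D_P] by simp
  moreover have "\<nu> D > 0" using nu_pos[OF D_P assms] .
  ultimately show ?case using Suc by simp
qed

lemma Bset_nu_finite: "finite {p \<in> P. \<nu> p \<le> c}"
proof -
  let ?T = "S - {\<one>}"
  have len: "length xs \<le> \<nu> (foldr (\<otimes>) xs \<one>) \<and> foldr (\<otimes>) xs \<one> \<in> P" if "set xs \<subseteq> ?T" for xs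
    using that
  proof (induction xs)
    case Nil then show ?case using one_P by simp
  next
    case (Cons a xs)
    then have a: "a \<in> P" "a \<noteq> \<one>" using S_P by auto
    have IH: "length xs \<le> \<nu> (foldr (\<otimes>) xs \<one>)" "foldr (\<otimes>) xs \<one> \<in> P" using Cons by auto
    have "\<nu> (a \<otimes> foldr (\<otimes>) xs \<one>) \<ge> \<nu> a + \<nu> (foldr (\<otimes>) xs \<one>)" using nu_add[OF a(1) IH(2)] .
    moreover have "\<nu> a > 0" using nu_pos a by auto
    ultimately show ?case using IH a mult_P by simp
  qed
  have filt: "foldr (\<otimes>) (filter (\<lambda>x. x \<noteq> \<one>) xs) \<one> = foldr (\<otimes>) xs \<one>" if "set xs \<subseteq> S" for xs
    using that by (induction xs) (auto simp: foldr_G)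
  have "{p \<in> P. \<nu> p \<le> c} \<subseteq> (\<lambda>xs. foldr (\<otimes>) xs \<one>) ` {xs. set xs \<subseteq> ?T \<and> length xs \<le> c}"
  proof
    fix p assume p: "p \<in> {p \<in> P. \<nu> p \<le> c}"
    obtain xs where xs: "set xs \<subseteq> S" "p = foldr (\<otimes>) xs \<one>" using S_gen p by (auto simp: S_def)
    let ?ys = "filter (\<lambda>x. x \<noteq> \<one>) xs"
    have ys: "set ?ys \<subseteq> ?T" using xs by auto
    have "p = foldr (\<otimes>) ?ys \<one>" using filt xs by simp
    moreover have "length ?ys \<le> c" using len[OF ys] p \<open>p = foldr (\<otimes>) ?ys \<one>\<close> by simp
    ultimately show "p \<in> (\<lambda>xs. foldr (\<otimes>) xs \<one>) ` {xs. set xs \<subseteq> ?T \<and> length xs \<le> c}" using ys by blast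
  qed
  moreover have "finite {xs. set xs \<subseteq> ?T \<and> length xs \<le> c}"
    using finite_lists_length_le[of ?T c] S_fin by (simp add: S_def)
  ultimately show ?thesis using finite_subset by blast
qed

end

locale gar2 = gar +
  fixes e :: nat
  assumes e_pos: "e > 0"
    and Zc: "g \<in> carrier G \<Longrightarrow> D [^] e \<otimes> g = g \<otimes> D [^] e"
    and D_ne: "D \<noteq> \<one>"
begin

definition "Z = D [^] e"

lemma Z_G[simp]: "Z \<in> carrier G" by (simp add: Z_def)
lemma Z_P: "Z \<in> P" by (simp add: Z_def pow_P D_P)
lemma Zc': "g \<in> carrier G \<Longrightarrow> Z \<otimes> g = g \<otimes> Z" using Zc by (simp add: Z_def)
lemma Zpc: "g \<in> carrier G \<Longrightarrow> Z [^] (k::int) \<otimes> g = g \<otimes> Z [^] k"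
  using comm_int_pow[OF Z_G _ Zc'] by simp
lemma Zpcn: "g \<in> carrier G \<Longrightarrow> Z [^] (k::nat) \<otimes> g = g \<otimes> Z [^] k"
proof -
  assume g: "g \<in> carrier G"
  show ?thesis using group_commutes_pow[OF Zc'[OF g] Z_G g] .
qed

lemma Z_inv_simple: assumes "s \<in> S" shows "Z \<otimes> inv s \<in> P"
proof -
  from assms obtain t where t: "t \<in> P" "s \<otimes> t = D" by (auto simp: S_def lprefix_def)
  have sG: "s \<in> carrier G" using assms by simp
  have tG: "t \<in> carrier G" using t by simp
  have "(t \<otimes> inv D) \<otimes> s = \<one>"
  proof -
    have "inv D \<otimes> s \<otimes> t = \<one>" using t(2) sG tG by (simp add: m_assoc)
    then have "inv D \<otimes> s = inv t" using sG tG by (metis inv_equality inv_closed m_closed DG inv_inv)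
    then have "t \<otimes> (inv D \<otimes> s) = \<one>" using tG by simp
    then show ?thesis using sG tG by (simp add: m_assoc)
  qed
  then have "inv s = t \<otimes> inv D" using sG tG by (intro inv_equality) auto
  have "Z \<otimes> inv s = inv s \<otimes> Z" using Zc'[OF inv_closed[OF sG]] .
  also have "\<dots> = t \<otimes> (inv D \<otimes> D [^] e)" using \<open>inv s = t \<otimes> inv D\<close> t by (simp add: Z_def m_assoc)
  also have "inv D \<otimes> D [^] e = D [^] (e - 1)"
  proof -
    have "D [^] e = D \<otimes> D [^] (e - 1)" using e_pos
      by (metis Suc_diff_1 DG nat_pow_Suc2)
    then show ?thesis by (simp add: m_assoc[symmetric])
  qed
  finally show ?thesis using t pow_P D_P mult_P by simp
qed

lemma Zpow_mono: assumes "g \<in> carrier G" "Z [^] (m::nat) \<otimes> g \<in> P" "m \<le> m'" shows "Z [^] m' \<otimes> g \<in> P"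
proof -
  have "Z [^] m' = Z [^] (m' - m) \<otimes> Z [^] m" using assms(3) by (simp add: nat_pow_mult)
  then have "Z [^] m' \<otimes> g = Z [^] (m' - m) \<otimes> (Z [^] m \<otimes> g)" using assms by (simp add: m_assoc)
  then show ?thesis using assms mult_P pow_P Z_P by simp
qed

lemma Z_inv_P: assumes "p \<in> P" shows "\<exists>m::nat. Z [^] m \<otimes> inv p \<in> P"
proof -
  obtain xs where xs: "set xs \<subseteq> S" "p = foldr (\<otimes>) xs \<one>" using S_gen assms by (auto simp: S_def)
  have "\<exists>m::nat. Z [^] m \<otimes> inv (foldr (\<otimes>) xs \<one>) \<in> P \<and> foldr (\<otimes>) xs \<one> \<in> carrier G" using xs(1)
  proof (induction xs)
    case Nil then show ?case using one_P by (intro exI[of _ 0]) simp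
  next
    case (Cons a xs)
    then obtain m :: nat where m: "Z [^] m \<otimes> inv (foldr (\<otimes>) xs \<one>) \<in> P" and F: "foldr (\<otimes>) xs \<one> \<in> carrier G" by auto
    have a: "a \<in> S" "a \<in> carrier G" using Cons by auto
    define F where "F = foldr (\<otimes>) xs \<one>"
    have FG: "F \<in> carrier G" using F F_def by simp
    have "Z [^] Suc m \<otimes> inv (a \<otimes> F) = (Z [^] m \<otimes> inv F) \<otimes> (Z \<otimes> inv a)"
    proof -
      have "Z [^] Suc m \<otimes> inv (a \<otimes> F) = Z [^] m \<otimes> (Z \<otimes> inv F) \<otimes> inv a"
        using a FG by (simp add: inv_mult_group m_assoc)
      also have "\<dots> = Z [^] m \<otimes> (inv F \<otimes> Z) \<otimes> inv a" using Zc' FG by simp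
      finally show ?thesis using a FG by (simp add: m_assoc)
    qed
    then have "Z [^] Suc m \<otimes> inv (a \<otimes> F) \<in> P" using m F_def Z_inv_simple[OF a(1)] mult_P by simp
    then show ?case using a FG F_def by (metis foldr_Cons o_apply m_closed)
  qed
  then show ?thesis using xs by simp
qed

lemma Z_shift: assumes "g \<in> carrier G" shows "\<exists>m::nat. Z [^] m \<otimes> g \<in> P"
proof -
  have "g \<in> generate G P" using assms gen by simp
  then show ?thesis
  proof (induction g rule: generate.induct)
    case one then show ?case using one_P by (intro exI[of _ 0]) simp
  next
    case (incl h) then show ?case by (intro exI[of _ 0]) simp
  next
    case (inv h) then show ?case using Z_inv_P by simp
  next
    case (eng h1 h2)
    have c: "h1 \<in> carrier G" "h2 \<in> carrier G" using eng generate_in_carrier PG by auto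
    obtain m1 m2 :: nat where m: "Z [^] m1 \<otimes> h1 \<in> P" "Z [^] m2 \<otimes> h2 \<in> P" using eng.IH by blast
    have "Z [^] (m1 + m2) \<otimes> (h1 \<otimes> h2) = (Z [^] m1 \<otimes> h1) \<otimes> (Z [^] m2 \<otimes> h2)"
    proof -
      have "Z [^] (m1 + m2) \<otimes> (h1 \<otimes> h2) = Z [^] m1 \<otimes> (Z [^] m2 \<otimes> h1) \<otimes> h2"
        using c by (simp add: nat_pow_mult[symmetric] m_assoc)
      also have "\<dots> = Z [^] m1 \<otimes> (h1 \<otimes> Z [^] m2) \<otimes> h2" using Zpcn c by simp
      finally show ?thesis using c by (simp add: m_assoc)
    qed
    then show ?case using m mult_P by metis
  qed
qed


lemma pos_above: assumes "a \<in> P" "x \<in> carrier G" "leL G P a x" shows "x \<in> P"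
proof -
  have "x = a \<otimes> (inv a \<otimes> x)" using assms by (simp add: m_assoc[symmetric])
  then show ?thesis using assms mult_P by (metis leL_def)
qed

lemma join2: assumes g: "g \<in> carrier G" and h: "h \<in> carrier G"
  shows "\<exists>j\<in>carrier G. leL G P g j \<and> leL G P h j \<and> (\<forall>c\<in>carrier G. leL G P g c \<and> leL G P h c \<longrightarrow> leL G P j c)"
proof -
  obtain m1 :: nat where m1: "Z [^] m1 \<otimes> g \<in> P" using Z_shift g by blast
  obtain m2 :: nat where m2: "Z [^] m2 \<otimes> h \<in> P" using Z_shift h by blast
  define m where "m = max m1 m2"
  define W where "W = Z [^] m"
  have WG: "W \<in> carrier G" by (simp add: W_def)
  have a: "W \<otimes> g \<in> P" using Zpow_mono[OF g m1] by (simp add: W_def m_def)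
  have b: "W \<otimes> h \<in> P" using Zpow_mono[OF h m2] by (simp add: W_def m_def)
  obtain jj where jj: "jj \<in> P" "lprefix G P (W \<otimes> g) jj" "lprefix G P (W \<otimes> h) jj"
    "\<forall>c\<in>P. lprefix G P (W \<otimes> g) c \<and> lprefix G P (W \<otimes> h) c \<longrightarrow> lprefix G P jj c"
    using lat a b unfolding is_lattice_on_def by blast
  define j where "j = inv W \<otimes> jj"
  have jG: "j \<in> carrier G" using jj WG by (simp add: j_def)
  have Wj: "W \<otimes> j = jj" using jj WG by (simp add: j_def m_assoc[symmetric])
  have "leL G P g j" using leL_left[OF WG g jG] jj(2) lprefix_leL a b jj(1) Wj by simp
  moreover have "leL G P h j" using leL_left[OF WG h jG] jj(3) lprefix_leL a b jj(1) Wj by simp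
  moreover have "leL G P j c" if c: "c \<in> carrier G" "leL G P g c" "leL G P h c" for c
  proof -
    have 1: "leL G P (W \<otimes> g) (W \<otimes> c)" using leL_left[OF WG g c(1)] c by simp
    have 2: "leL G P (W \<otimes> h) (W \<otimes> c)" using leL_left[OF WG h c(1)] c by simp
    have Wc: "W \<otimes> c \<in> P" using pos_above[OF a _ 1] WG c by simp
    have "lprefix G P jj (W \<otimes> c)" using jj(4) Wc 1 2 lprefix_leL a b WG c by simp
    then have "leL G P (W \<otimes> j) (W \<otimes> c)" using lprefix_leL jj(1) Wj WG c by simp
    then show ?thesis using leL_left[OF WG jG c(1)] by simp
  qed
  ultimately show ?thesis using jG by blast
qed

lemma joinF: assumes "finite A" "A \<noteq> {}" "A \<subseteq> carrier G"
  shows "\<exists>y\<in>carrier G. (\<forall>a\<in>A. leL G P a y) \<and> (\<forall>c\<in>carrier G. (\<forall>a\<in>A. leL G P a c) \<longrightarrow> leL G P y c)"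
  using assms
proof (induction A rule: finite_ne_induct)
  case (singleton x) then show ?case using leL_refl by auto
next
  case (insert x F)
  then obtain y where y: "y \<in> carrier G" "\<forall>a\<in>F. leL G P a y"
    "\<forall>c\<in>carrier G. (\<forall>a\<in>F. leL G P a c) \<longrightarrow> leL G P y c" by auto
  have xG: "x \<in> carrier G" using insert by auto
  obtain j where j: "j \<in> carrier G" "leL G P x j" "leL G P y j"
    "\<forall>c\<in>carrier G. leL G P x c \<and> leL G P y c \<longrightarrow> leL G P j c" using join2[OF xG y(1)] by blast
  have FG: "F \<subseteq> carrier G" using insert by auto
  have "\<forall>a\<in>insert x F. leL G P a j"
  proof
    fix a assume a: "a \<in> insert x F"
    show "leL G P a j"
    proof (cases "a = x")
      case True then show ?thesis using j by simp
    next
      case False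
      then have "a \<in> F" using a by simp
      then have "leL G P a y" "a \<in> carrier G" using y FG by auto
      then show ?thesis using leL_trans[of a y j] y(1) j by blast
    qed
  qed
  moreover have "\<forall>c\<in>carrier G. (\<forall>a\<in>insert x F. leL G P a c) \<longrightarrow> leL G P j c"
  proof (intro ballI impI)
    fix c assume c: "c \<in> carrier G" "\<forall>a\<in>insert x F. leL G P a c"
    then have "leL G P y c" using y(3) by blast
    moreover have "leL G P x c" using c by blast
    ultimately show "leL G P j c" using j(4) c(1) by blast
  qed
  ultimately show ?case using j(1) by blast
qed

lemma torsion_free: assumes x: "x \<in> carrier G" and n: "n > 0" and xn: "x [^] (n::nat) = \<one>"
  shows "x = \<one>"
proof -
  define A where "A = (\<lambda>k. x [^] k) ` {..<n}"
  have AG: "A \<subseteq> carrier G" using x by (auto simp: A_def)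
  obtain y where y: "y \<in> carrier G" "\<forall>a\<in>A. leL G P a y"
    "\<forall>c\<in>carrier G. (\<forall>a\<in>A. leL G P a c) \<longrightarrow> leL G P y c"
    using joinF[of A] AG n by (auto simp: A_def)
  have fw: "x \<otimes> a \<in> A" if aA: "a \<in> A" for a
  proof -
    obtain k :: nat where k: "k < n" "a = x [^] k" using aA unfolding A_def by blast
    show ?thesis
    proof (cases "Suc k < n")
      case True
      have "x \<otimes> a = x [^] Suc k" using k(2) x nat_pow_Suc2 by metis
      then show ?thesis using True unfolding A_def by (metis image_eqI lessThan_iff)
    next
      case False
      then have "Suc k = n" using k by simp
      then have "x \<otimes> a = x [^] Suc k" using k(2) x nat_pow_Suc2 by metis
      then have "x \<otimes> a = \<one>" using xn \<open>Suc k = n\<close> by simp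
      then show ?thesis using n by (auto simp: A_def intro!: image_eqI[of _ _ 0])
    qed
  qed
  have bw: "inv x \<otimes> a \<in> A" if aA: "a \<in> A" for a
  proof -
    obtain k :: nat where k: "k < n" "a = x [^] k" using aA unfolding A_def by blast
    show ?thesis
    proof (cases k)
      case 0
      have "x [^] n = x [^] (n - 1) \<otimes> x" using n x by (metis Suc_diff_1 nat_pow_Suc)
      then have "x [^] (n - 1) \<otimes> x = \<one>" using xn by simp
      then have "inv x = x [^] (n - 1)" using x by (intro inv_equality) auto
      then show ?thesis using 0 k x n by (auto simp: A_def)
    next
      case (Suc k')
      then have "a = x \<otimes> x [^] k'" using k x nat_pow_Suc2 by metis
      then have "inv x \<otimes> a = x [^] k'" using x by (simp add: m_assoc[symmetric])
      then show ?thesis using k Suc by (auto simp: A_def)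
    qed
  qed
  have xyG: "x \<otimes> y \<in> carrier G" "inv x \<otimes> y \<in> carrier G" using x y by auto
  have 1: "leL G P y (x \<otimes> y)"
  proof -
    have "leL G P a (x \<otimes> y)" if "a \<in> A" for a
    proof -
      have aG: "a \<in> carrier G" using that AG by auto
      have "leL G P (inv x \<otimes> a) y" using y bw that by auto
      then have "leL G P (inv x \<otimes> a) (inv x \<otimes> (x \<otimes> y))" using x y by (simp add: m_assoc[symmetric])
      then show ?thesis using leL_left[of "inv x" a "x \<otimes> y"] aG xyG x by simp
    qed
    then show ?thesis using y xyG by auto
  qed
  have 2: "leL G P y (inv x \<otimes> y)"
  proof -
    have "leL G P a (inv x \<otimes> y)" if "a \<in> A" for a
    proof -
      have aG: "a \<in> carrier G" using that AG by auto
      have "leL G P (x \<otimes> a) y" using y fw that by auto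
      then have "leL G P (x \<otimes> a) (x \<otimes> (inv x \<otimes> y))" using x y by (simp add: m_assoc[symmetric])
      then show ?thesis using leL_left[of x a "inv x \<otimes> y"] aG xyG x by simp
    qed
    then show ?thesis using y xyG by auto
  qed
  have "leL G P (x \<otimes> y) (x \<otimes> (inv x \<otimes> y))" using leL_left[OF x y(1) xyG(2)] 2 by simp
  then have "leL G P (x \<otimes> y) y" using x y by (simp add: m_assoc[symmetric])
  then have "x \<otimes> y = y" using leL_antisym 1 xyG y by blast
  then show ?thesis using x y r_cancel_one by blast
qed


definition "Bset = {p \<in> P. leL G P p Z}"

lemma Bset_finite: "finite Bset"
proof -
  have "Bset \<subseteq> {p \<in> P. \<nu> p \<le> \<nu> Z}"
  proof
    fix p assume p: "p \<in> Bset"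
    then have pP: "p \<in> P" and q: "inv p \<otimes> Z \<in> P" by (auto simp: Bset_def leL_def)
    have "Z = p \<otimes> (inv p \<otimes> Z)" using pP by (simp add: m_assoc[symmetric])
    then have "\<nu> Z \<ge> \<nu> p + \<nu> (inv p \<otimes> Z)" using nu_add[OF pP q] by simp
    then show "p \<in> {p \<in> P. \<nu> p \<le> \<nu> Z}" using pP by simp
  qed
  then show ?thesis using Bset_nu_finite finite_subset by blast
qed

lemma Z_ne: "Z \<noteq> \<one>"
proof
  assume "Z = \<one>"
  then have "D [^] e = \<one>" by (simp add: Z_def)
  then have "D = \<one>" using torsion_free[OF DG e_pos] by simp
  then show False using D_ne by simp
qed

lemma invZc: assumes "g \<in> carrier G" shows "inv Z \<otimes> g = g \<otimes> inv Z"
proof -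
  have "Z [^] (-1::int) = inv Z" using int_pow_neg[OF Z_G, of 1] by simp
  then show ?thesis using Zpc[OF assms, of "-1"] by simp
qed

lemma leL_Zr: assumes "a \<in> carrier G" "b \<in> carrier G" "leL G P a b" shows "leL G P (a \<otimes> Z) (b \<otimes> Z)"
proof -
  have "inv (a \<otimes> Z) \<otimes> (b \<otimes> Z) = inv Z \<otimes> ((inv a \<otimes> b) \<otimes> Z)" using assms by (simp add: inv_mult_group m_assoc)
  also have "\<dots> = inv Z \<otimes> (Z \<otimes> (inv a \<otimes> b))" using Zc'[of "inv a \<otimes> b"] assms by simp
  also have "\<dots> = inv a \<otimes> b" using assms by (simp add: m_assoc[symmetric])
  finally show ?thesis using assms by (simp add: leL_def)
qed

lemma leL_selfZ: "y \<in> carrier G \<Longrightarrow> leL G P y (y \<otimes> Z)"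
  using Z_P by (simp add: leL_def m_assoc[symmetric])

lemma leL_invZ: assumes "w \<in> carrier G" shows "leL G P (inv Z \<otimes> w) w"
proof -
  have "inv (inv Z \<otimes> w) \<otimes> w = inv w \<otimes> (Z \<otimes> w)" using assms by (simp add: inv_mult_group m_assoc)
  also have "\<dots> = inv w \<otimes> (w \<otimes> Z)" using Zc' assms by simp
  also have "\<dots> = Z" using assms by (simp add: m_assoc[symmetric])
  finally show ?thesis using Z_P by (simp add: leL_def)
qed

lemma boundB: assumes x: "x \<in> carrier G" and n: "n > 0" and xn: "x [^] (n::nat) = Z"
  shows "n \<le> card Bset"
proof -
  define A where "A = (\<lambda>k. x [^] k) ` {..<n}"
  have AG: "A \<subseteq> carrier G" using x by (auto simp: A_def)
  obtain y where y: "y \<in> carrier G" "\<forall>a\<in>A. leL G P a y"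
    "\<forall>c\<in>carrier G. (\<forall>a\<in>A. leL G P a c) \<longrightarrow> leL G P y c"
    using joinF[of A] AG n by (auto simp: A_def)
  have yA: "leL G P (x [^] j) y" if "j < n" for j using y(2) that by (auto simp: A_def)
  have up: "leL G P y (x [^] k \<otimes> y)" if k: "k < n" for k
  proof -
    have "leL G P (x [^] j) (x [^] k \<otimes> y)" if j: "j < n" for j
    proof -
      have "leL G P (inv (x [^] k) \<otimes> x [^] j) y"
      proof (cases "k \<le> j")
        case True
        have "x [^] j = x [^] k \<otimes> x [^] (j - k)" using True x by (simp add: nat_pow_mult)
        then have "inv (x [^] k) \<otimes> x [^] j = x [^] (j - k)" using x by (simp add: m_assoc[symmetric])
        then show ?thesis using yA j by simp
      next
        case False
        define w where "w = x [^] (j + n - k)"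
        have wG: "w \<in> carrier G" using x by (simp add: w_def)
        have xkG: "x [^] k \<in> carrier G" using x by simp
        have "x [^] k \<otimes> (inv Z \<otimes> w) = (x [^] k \<otimes> inv Z) \<otimes> w" using xkG wG by (simp add: m_assoc)
        also have "\<dots> = (inv Z \<otimes> x [^] k) \<otimes> w" using invZc[OF xkG] by simp
        also have "\<dots> = inv Z \<otimes> (x [^] k \<otimes> w)" using xkG wG by (simp add: m_assoc)
        also have "x [^] k \<otimes> w = x [^] (k + (j + n - k))" using x by (simp add: w_def nat_pow_mult)
        also have "k + (j + n - k) = n + j" using False j k by arith
        also have "x [^] (n + j) = x [^] n \<otimes> x [^] j" using x by (simp add: nat_pow_mult)
        also have "inv Z \<otimes> (x [^] n \<otimes> x [^] j) = x [^] j" using xn x by (simp add: m_assoc[symmetric])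
        finally have eq: "x [^] k \<otimes> (inv Z \<otimes> w) = x [^] j" .
        have "inv (x [^] k) \<otimes> (x [^] k \<otimes> (inv Z \<otimes> w)) = inv (x [^] k) \<otimes> x [^] j" by (simp only: eq)
        then have "inv Z \<otimes> w = inv (x [^] k) \<otimes> x [^] j" using xkG wG by (simp add: m_assoc[symmetric])
        moreover have "leL G P (inv Z \<otimes> w) w" using leL_invZ wG .
        moreover have "leL G P w y" using yA False j by (simp add: w_def)
        ultimately show ?thesis using leL_trans[of "inv Z \<otimes> w" w y] wG y(1) x by simp
      qed
      then have "leL G P (inv (x [^] k) \<otimes> x [^] j) (inv (x [^] k) \<otimes> (x [^] k \<otimes> y))"
        using x y by (simp add: m_assoc[symmetric])
      then show ?thesis using leL_left[of "inv (x [^] k)" "x [^] j" "x [^] k \<otimes> y"] x y by simp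
    qed
    then show ?thesis using y(3) x y(1) by (auto simp: A_def)
  qed
  have down: "leL G P (x [^] k \<otimes> y) (y \<otimes> Z)" if k: "k < n" for k
  proof -
    define u where "u = inv (x [^] k) \<otimes> (y \<otimes> Z)"
    have uG: "u \<in> carrier G" using x y by (simp add: u_def)
    have xu: "x [^] k \<otimes> u = y \<otimes> Z" using x y by (simp add: u_def m_assoc[symmetric])
    have "leL G P (x [^] j) u" if j: "j < n" for j
    proof -
      have "leL G P (x [^] k \<otimes> x [^] j) (y \<otimes> Z)"
      proof (cases "k + j < n")
        case True
        then have "leL G P (x [^] k \<otimes> x [^] j) y" using yA x by (simp add: nat_pow_mult)
        then show ?thesis using leL_trans[of "x [^] k \<otimes> x [^] j" y "y \<otimes> Z"] leL_selfZ[OF y(1)] y x by simp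
      next
        case False
        have "x [^] k \<otimes> x [^] j = x [^] (k + j - n) \<otimes> x [^] n" using False x by (simp add: nat_pow_mult)
        then have "x [^] k \<otimes> x [^] j = x [^] (k + j - n) \<otimes> Z" using xn by simp
        moreover have "leL G P (x [^] (k + j - n)) y" using yA k j by simp
        ultimately show ?thesis using leL_Zr[of "x [^] (k + j - n)" y] x y by simp
      qed
      then show ?thesis using leL_left[of "x [^] k" "x [^] j" u] x uG xu by simp
    qed
    then have "leL G P y u" using y(3) uG by (auto simp: A_def)
    then show ?thesis using leL_left[of "x [^] k" y u] x y uG xu by simp
  qed
  define c where "c k = inv y \<otimes> (x [^] k \<otimes> y)" for k :: nat
  have cB: "c k \<in> Bset" if "k < n" for k
  proof -
    have "c k \<in> P" using up[OF that] by (simp add: leL_def c_def)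
    moreover have "leL G P (inv y \<otimes> (x [^] k \<otimes> y)) (inv y \<otimes> (y \<otimes> Z))"
      using leL_left[of "inv y" "x [^] k \<otimes> y" "y \<otimes> Z"] down[OF that] x y by simp
    then have "leL G P (c k) Z" using y by (simp add: c_def m_assoc[symmetric])
    ultimately show ?thesis by (simp add: Bset_def)
  qed
  have pinj: "k = j" if kj: "k < n" "j < n" "x [^] k = x [^] j" for k j
  proof (rule ccontr)
    assume ne: "k \<noteq> j"
    have "\<exists>d. d > 0 \<and> x [^] (d::nat) = \<one>"
    proof (cases "j < k")
      case True
      have "x [^] k = x [^] j \<otimes> x [^] (k - j)" using True x by (simp add: nat_pow_mult)
      then have "x [^] (k - j) = \<one>" using kj x by simp
      then show ?thesis using True by (intro exI[of _ "k - j"]) simp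
    next
      case False
      then have jk: "k < j" using ne by simp
      have "x [^] j = x [^] k \<otimes> x [^] (j - k)" using jk x by (simp add: nat_pow_mult)
      then have "x [^] (j - k) = \<one>" using kj x by simp
      then show ?thesis using jk by (intro exI[of _ "j - k"]) simp
    qed
    then obtain d :: nat where d: "d > 0" "x [^] d = \<one>" by blast
    have "Z [^] d = (x [^] n) [^] d" using xn by simp
    also have "\<dots> = (x [^] d) [^] n" using x by (simp add: nat_pow_pow mult.commute)
    also have "\<dots> = \<one>" using d by simp
    finally have "Z = \<one>" using torsion_free[OF Z_G d(1)] by simp
    then show False using Z_ne by simp
  qed
  have "inj_on c {..<n}"
  proof (rule inj_onI)
    fix k j assume kj: "k \<in> {..<n}" "j \<in> {..<n}" "c k = c j"
    then have "x [^] k \<otimes> y = x [^] j \<otimes> y" using x y by (simp add: c_def)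
    then have "x [^] k = x [^] j" using x y by simp
    then show "k = j" using pinj kj by simp
  qed
  then have "card {..<n} \<le> card Bset" using card_inj_on_le[of c "{..<n}" Bset] cB Bset_finite by auto
  then show ?thesis by simp
qed


lemma leL_Dpow: "g \<in> carrier G \<Longrightarrow> leL G P (D [^] (r::int)) g \<longleftrightarrow> D [^] (-r) \<otimes> g \<in> P"
  by (simp add: leL_def int_pow_neg)

lemma ginf_exists: assumes g: "g \<in> carrier G"
  shows "\<exists>r0::int. leL G P (D [^] r0) g \<and> (\<forall>r::int. leL G P (D [^] r) g \<longrightarrow> r \<le> r0)"
proof -
  obtain m :: nat where m: "Z [^] m \<otimes> g \<in> P" using Z_shift g by blast
  define r1 where "r1 = - int (e * m)"
  have "D [^] (-r1) = D [^] (int (e * m))" by (simp only: r1_def minus_minus)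
  also have "\<dots> = D [^] (e * m)" by (rule int_pow_int)
  also have "\<dots> = Z [^] m" by (simp add: Z_def nat_pow_pow)
  finally have "D [^] (-r1) = Z [^] m" .
  then have r1: "leL G P (D [^] r1) g" using leL_Dpow g m by simp
  define B where "B = \<nu> (D [^] (-r1) \<otimes> g)"
  have bnd: "r \<le> r1 + int B" if r: "leL G P (D [^] r) g" for r :: int
  proof (cases "r \<le> r1")
    case True then show ?thesis by simp
  next
    case False
    define k where "k = nat (r - r1)"
    have kr: "int k = r - r1" using False by (simp add: k_def)
    have "D [^] (-r1) = D [^] (int k + (-r))" using kr by simp
    also have "\<dots> = D [^] (int k) \<otimes> D [^] (-r)" by (rule int_pow_mult[OF DG])
    also have "\<dots> = D [^] k \<otimes> D [^] (-r)" by (simp only: int_pow_int)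
    finally have "D [^] (-r1) \<otimes> g = D [^] k \<otimes> (D [^] (-r) \<otimes> g)" using g by (simp add: m_assoc)
    moreover have "D [^] (-r) \<otimes> g \<in> P" using r leL_Dpow g by simp
    ultimately have "\<nu> (D [^] (-r1) \<otimes> g) \<ge> \<nu> (D [^] k) + \<nu> (D [^] (-r) \<otimes> g)"
      using nu_add[OF pow_P[OF D_P, of k]] by simp
    then have "\<nu> (D [^] (-r1) \<otimes> g) \<ge> \<nu> (D [^] k)" by simp
    then have "B \<ge> k" using nu_Dpow[OF D_ne, of k] by (simp add: B_def)
    then show ?thesis using kr by simp
  qed
  define R where "R = {r. leL G P (D [^] r) g \<and> r1 \<le> r \<and> r \<le> r1 + int B}"
  have fR: "finite R" by (rule finite_subset[of _ "{r1..r1 + int B}"]) (auto simp: R_def)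
  have neR: "r1 \<in> R" using r1 by (simp add: R_def)
  define r0 where "r0 = Max R"
  have "r0 \<in> R" using fR neR Max_in by (auto simp: r0_def)
  moreover have "r \<le> r0" if "leL G P (D [^] r) g" for r
  proof (cases "r \<le> r1")
    case True then show ?thesis using Max_ge[OF fR neR] r0_def by simp
  next
    case False then have "r \<in> R" using that bnd by (simp add: R_def)
    then show ?thesis using Max_ge[OF fR] r0_def by simp
  qed
  ultimately show ?thesis by (auto simp: R_def)
qed

lemma ginf_eqI: assumes "g \<in> carrier G" "leL G P (D [^] r) g" "\<forall>s. leL G P (D [^] s) g \<longrightarrow> s \<le> r"
  shows "ginf G P D g = r"
  unfolding ginf_def using assms by (intro Greatest_equality) auto

lemma ginf_char: assumes "g \<in> carrier G"
  shows "leL G P (D [^] ginf G P D g) g \<and> (\<forall>r. leL G P (D [^] r) g \<longrightarrow> r \<le> ginf G P D g)"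
proof -
  obtain r0 :: int where r0: "leL G P (D [^] r0) g" "\<forall>r. leL G P (D [^] r) g \<longrightarrow> r \<le> r0"
    using ginf_exists[OF assms] by blast
  then have "ginf G P D g = r0" using ginf_eqI assms by blast
  then show ?thesis using r0 by simp
qed

lemma ginf_shift: assumes g: "g \<in> carrier G" shows "ginf G P D (D [^] (c::int) \<otimes> g) = c + ginf G P D g"
proof -
  have eq: "leL G P (D [^] s) (D [^] c \<otimes> g) \<longleftrightarrow> leL G P (D [^] (s - c)) g" for s
  proof -
    have "s - c = -c + s" by simp
    then have "D [^] (s - c) = D [^] (-c) \<otimes> D [^] s" using int_pow_mult[OF DG, of "-c" s] by simp
    then have "D [^] (s - c) = inv (D [^] c) \<otimes> D [^] s" using int_pow_neg[OF DG, of c] by simp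
    moreover have "inv (D [^] c) \<otimes> (D [^] c \<otimes> g) = g" using g by (simp add: m_assoc[symmetric])
    ultimately show ?thesis using leL_left[of "inv (D [^] c)" "D [^] s" "D [^] c \<otimes> g"] g by simp
  qed
  have c1: "leL G P (D [^] ginf G P D g) g" "\<forall>r. leL G P (D [^] r) g \<longrightarrow> r \<le> ginf G P D g"
    using ginf_char[OF g] by auto
  show ?thesis
  proof (rule ginf_eqI)
    show "D [^] c \<otimes> g \<in> carrier G" using g by simp
    show "leL G P (D [^] (c + ginf G P D g)) (D [^] c \<otimes> g)" using eq c1 by simp
    show "\<forall>s. leL G P (D [^] s) (D [^] c \<otimes> g) \<longrightarrow> s \<le> c + ginf G P D g"
    proof (intro allI impI)
      fix s :: int assume "leL G P (D [^] s) (D [^] c \<otimes> g)"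
      then have "leL G P (D [^] (s - c)) g" using eq by blast
      then have "s - c \<le> ginf G P D g" using c1(2) by blast
      then show "s \<le> c + ginf G P D g" by simp
    qed
  qed
qed

lemma gINF_formula: assumes g: "g \<in> carrier G" and N: "N > 0" and gN: "g [^] (N::nat) = D [^] (c::int)"
  shows "gINF G P D g = real_of_int c / real N"
proof -
  define f where "f n = ginf G P D (g [^] (n::nat))" for n
  have fn: "f n = c * int (n div N) + f (n mod N)" for n
  proof -
    have "g [^] n = g [^] (N * (n div N) + n mod N)" by simp
    also have "\<dots> = g [^] (N * (n div N)) \<otimes> g [^] (n mod N)" using g by (simp only: nat_pow_mult)
    also have "g [^] (N * (n div N)) = (g [^] N) [^] (n div N)" using g by (simp only: nat_pow_pow)
    also have "\<dots> = (D [^] c) [^] (int (n div N))" by (simp only: gN int_pow_int)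
    also have "\<dots> = D [^] (c * int (n div N))" by (rule int_pow_pow[OF DG])
    finally have "g [^] n = D [^] (c * int (n div N)) \<otimes> g [^] (n mod N)" .
    then show ?thesis using ginf_shift[of "g [^] (n mod N)" "c * int (n div N)"] g by (simp add: f_def)
  qed
  define B where "B = Max ((\<lambda>r. \<bar>f r\<bar>) ` {..<N})"
  have fB: "\<bar>f r\<bar> \<le> B" if "r < N" for r using that by (auto simp: B_def intro!: Max_ge)
  define K where "K = real_of_int B + \<bar>real_of_int c\<bar>"
  have bound: "norm (f n / real n - c / real N) \<le> norm (1 / real n) * K" if n: "n \<ge> 1" for n
  proof -
    define q where "q = n div N"
    define r where "r = n mod N"
    have nqr: "n = N * q + r" by (simp add: q_def r_def)
    have rN: "r < N" using N by (simp add: r_def)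
    have e1: "real_of_int (f n) = real_of_int c * real q + real_of_int (f r)" using fn[of n] by (simp add: q_def r_def)
    have Npos: "real N > 0" using N by simp
    have npos: "real n > 0" using n by simp
    have rn: "real n = real N * real q + real r" using nqr by simp
    have "f n / real n - c / real N = (f r - c * real r / real N) / real n"
    proof -
      have "f n / real n - c / real N = (real N * f n - c * real n) / (real N * real n)"
        using Npos npos by (simp add: field_simps)
      also have "real N * f n - c * real n = real N * f r - c * real r" using e1 rn by (simp add: algebra_simps)
      also have "(real N * f r - c * real r) / (real N * real n) = (f r - c * real r / real N) / real n"
        using Npos npos by (simp add: field_simps)
      finally show ?thesis .
    qed
    moreover have "\<bar>f r - c * real r / real N\<bar> \<le> K"
    proof -
      have "real r / real N \<le> 1" using rN Npos by simp
      have "\<bar>c * real r / real N\<bar> = \<bar>real_of_int c\<bar> * (real r / real N)" by (simp add: abs_mult)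
      also have "\<dots> \<le> \<bar>real_of_int c\<bar>" using \<open>real r / real N \<le> 1\<close> mult_left_le[of "real r / real N" "\<bar>real_of_int c\<bar>"] by simp
      finally have a1: "\<bar>c * real r / real N\<bar> \<le> \<bar>real_of_int c\<bar>" .
      have a2: "\<bar>real_of_int (f r)\<bar> \<le> B" using fB[OF rN] by linarith
      show ?thesis unfolding K_def using abs_triangle_ineq4[of "real_of_int (f r)" "c * real r / real N"] a1 a2 by linarith
    qed
    ultimately have "\<bar>f n / real n - c / real N\<bar> \<le> K / real n"
      using npos by (simp add: abs_divide divide_right_mono)
    then show ?thesis using npos by simp
  qed
  have "(\<lambda>n. f n / real n - c / real N) \<longlonglongrightarrow> 0"
  proof -
    have ev: "eventually (\<lambda>n. norm (f n / real n - c / real N) \<le> norm (1 / real n) * K) sequentially"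
      using bound by (intro eventually_sequentiallyI[of 1]) auto
    show ?thesis by (rule tendsto_0_le[OF lim_const_over_n[of "1::real"] ev])
  qed
  then have "(\<lambda>n. f n / real n) \<longlonglongrightarrow> c / real N"
    by (simp add: LIM_zero_iff)
  then show ?thesis unfolding gINF_def f_def by (rule limI)
qed


lemma conj_nat_pow: assumes "x \<in> carrier G" "y \<in> carrier G"
  shows "(x \<otimes> y \<otimes> inv x) [^] (n::nat) = x \<otimes> y [^] n \<otimes> inv x"
proof (induction n)
  case 0 then show ?case using assms by simp
next
  case (Suc n)
  have "(x \<otimes> y \<otimes> inv x) [^] Suc n = (x \<otimes> y [^] n \<otimes> inv x) \<otimes> (x \<otimes> y \<otimes> inv x)"
    using Suc by simp
  also have "\<dots> = x \<otimes> (y [^] n \<otimes> y) \<otimes> inv x" using assms by (simp add: m_assoc)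
  finally show ?case by simp
qed

lemma Zpow_int: "D [^] (int e * a) = Z [^] (a::int)"
proof -
  have "Z [^] a = (D [^] (int e)) [^] a" by (simp add: Z_def int_pow_int)
  also have "\<dots> = D [^] (int e * a)" by (rule int_pow_pow[OF DG])
  finally show ?thesis by simp
qed

lemma periodic_pow: assumes h: "h \<in> carrier G" and per: "periodic G D h"
  shows "\<exists>N::nat. N > 0 \<and> (\<exists>a::int. h [^] N = D [^] (int e * a))"
proof (cases "h = \<one>")
  case True then show ?thesis by (intro exI[of _ 1]) (auto intro: exI[of _ 0])
next
  case False
  then obtain k l :: int and x where kl: "k \<noteq> 0" "l \<noteq> 0" "x \<in> carrier G"
    "h [^] k = x \<otimes> D [^] l \<otimes> inv x" using per by (auto simp: periodic_def)
  have "(h [^] k) [^] e = x \<otimes> (D [^] l) [^] e \<otimes> inv x" using conj_nat_pow kl by simp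
  moreover have "(h [^] k) [^] e = h [^] (k * int e)"
    using int_pow_pow[OF h, of k "int e"] by (simp add: int_pow_int)
  moreover have "(D [^] l) [^] e = Z [^] l"
  proof -
    have "(D [^] l) [^] e = (D [^] l) [^] (int e)" by (simp add: int_pow_int)
    also have "\<dots> = D [^] (int e * l)" using int_pow_pow[OF DG, of l "int e"] by (simp add: mult.commute)
    finally show ?thesis using Zpow_int by simp
  qed
  moreover have "x \<otimes> Z [^] l \<otimes> inv x = Z [^] l"
  proof -
    have "x \<otimes> Z [^] l \<otimes> inv x = Z [^] l \<otimes> x \<otimes> inv x" using Zpc[OF kl(3), of l] by simp
    also have "\<dots> = Z [^] l" using kl(3) by (simp add: m_assoc)
    finally show ?thesis .
  qed
  ultimately have hk: "h [^] (k * int e) = D [^] (int e * l)" using Zpow_int by simp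
  show ?thesis
  proof (cases "k * int e > 0")
    case True
    have "h [^] nat (k * int e) = h [^] (k * int e)" using True by (simp add: pow_nat)
    then have "h [^] nat (k * int e) = D [^] (int e * l)" using hk by simp
    moreover have "nat (k * int e) > 0" using True by simp
    ultimately show ?thesis by blast
  next
    case False
    then have neg: "k * int e < 0" using kl(1) e_pos by (simp add: mult_less_0_iff linorder_not_less le_less)
    have "h [^] nat (- (k * int e)) = h [^] (- (k * int e))" using neg by (simp add: pow_nat)
    also have "\<dots> = inv (D [^] (int e * l))" using hk int_pow_neg[OF h, of "k * int e"] by simp
    also have "\<dots> = D [^] (int e * (- l))" using int_pow_neg[OF DG, of "int e * l"] by simp
    finally have eq: "h [^] nat (- (k * int e)) = D [^] (int e * (- l))" .
    moreover have "nat (- (k * int e)) > 0" using neg by simp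
    ultimately show ?thesis by blast
  qed
qed

lemma pow_scale: assumes h: "h \<in> carrier G" and hN: "h [^] (N::nat) = D [^] (c::int)"
  shows "h [^] (N * m) = D [^] (c * int m)"
proof -
  have "h [^] (N * m) = (h [^] N) [^] m" using h by (simp add: nat_pow_pow)
  also have "\<dots> = (D [^] c) [^] (int m)" using hN by (simp add: int_pow_int)
  also have "\<dots> = D [^] (c * int m)" by (rule int_pow_pow[OF DG])
  finally show ?thesis .
qed

lemma den_bound: assumes h: "h \<in> carrier G" and N: "N > 0" and hN: "h [^] (N::nat) = D [^] (int e * a)"
  shows "\<exists>z::int. gINF G P D h * real (fact (card Bset)) = real e * real_of_int z"
proof -
  define d where "d = gcd (int N) a"
  have dpos: "d > 0" using N by (simp add: d_def)
  have "gcd (int N) a \<noteq> 0" using dpos by (simp add: d_def)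
  from gcd_coprime_exists[OF this] obtain N' a' where Na: "int N = N' * d" "a = a' * d" "coprime N' a'"
    unfolding d_def[symmetric] by blast
  have "N' * d > 0" using Na(1) N by linarith
  then have N'pos: "N' > 0" using dpos by (simp add: zero_less_mult_iff)
  have hZ: "h [^] (int N) = Z [^] a" using hN Zpow_int by (simp add: int_pow_int)
  define w where "w = h [^] N' \<otimes> Z [^] (-a')"
  have hNG: "h [^] N' \<in> carrier G" using h by simp
  have ZaG: "Z [^] (-a') \<in> carrier G" by simp
  have wG: "w \<in> carrier G" using h by (simp add: w_def)
  have com1: "h [^] N' \<otimes> Z [^] (-a') = Z [^] (-a') \<otimes> h [^] N'" using Zpc[OF hNG, of "-a'"] by simp
  have "w [^] d = (h [^] N') [^] d \<otimes> (Z [^] (-a')) [^] d"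
    unfolding w_def by (rule int_pow_mult_distrib[OF com1 hNG ZaG])
  also have "(h [^] N') [^] d = h [^] (int N)" using int_pow_pow[OF h, of N' d] Na(1) by simp
  also have "(Z [^] (-a')) [^] d = Z [^] (- a)" using int_pow_pow[OF Z_G, of "-a'" d] Na(2) by simp
  also have "h [^] (int N) \<otimes> Z [^] (- a) = \<one>" using hZ int_pow_mult[OF Z_G, of a "-a"] by simp
  finally have "w [^] d = \<one>" .
  then have "w [^] (nat d) = \<one>" using dpos by (simp add: pow_nat)
  moreover have "nat d > 0" using dpos by simp
  ultimately have "w = \<one>" using torsion_free[OF wG] by blast
  have hN': "h [^] N' = Z [^] a'"
  proof -
    have "h [^] N' \<otimes> Z [^] (-a') \<otimes> Z [^] a' = Z [^] a'" using \<open>w = \<one>\<close> by (simp add: w_def)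
    moreover have "Z [^] (-a') \<otimes> Z [^] a' = \<one>" using int_pow_mult[OF Z_G, of "-a'" a'] by simp
    ultimately show ?thesis using hNG by (simp add: m_assoc)
  qed
  have "gcd a' N' = 1" using Na(3) by (simp add: coprime_iff_gcd_eq_1 gcd.commute)
  then obtain u v where uv: "u * a' + v * N' = 1" using bezout_int[of a' N'] by auto
  define x where "x = h [^] u \<otimes> Z [^] v"
  have huG: "h [^] u \<in> carrier G" using h by simp
  have ZvG: "Z [^] v \<in> carrier G" by simp
  have xG: "x \<in> carrier G" using h by (simp add: x_def)
  have com2: "h [^] u \<otimes> Z [^] v = Z [^] v \<otimes> h [^] u" using Zpc[OF huG, of v] by simp
  have "x [^] N' = (h [^] u) [^] N' \<otimes> (Z [^] v) [^] N'"
    unfolding x_def by (rule int_pow_mult_distrib[OF com2 huG ZvG])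
  also have "(h [^] u) [^] N' = (h [^] N') [^] u" using int_pow_pow[OF h, of u N'] int_pow_pow[OF h, of N' u] by (simp add: mult.commute)
  also have "\<dots> = Z [^] (a' * u)" using hN' int_pow_pow[OF Z_G, of a' u] by simp
  also have "(Z [^] v) [^] N' = Z [^] (v * N')" using int_pow_pow[OF Z_G, of v N'] by simp
  also have "Z [^] (a' * u) \<otimes> Z [^] (v * N') = Z [^] (a' * u + v * N')" using int_pow_mult[OF Z_G, of "a' * u" "v * N'"] by simp
  also have "a' * u + v * N' = 1" using uv by (simp add: mult.commute)
  finally have "x [^] N' = Z" by simp
  then have "x [^] (nat N') = Z" using N'pos by (simp add: pow_nat)
  then have "nat N' \<le> card Bset" using boundB[OF xG] N'pos by simp
  then have "nat N' dvd fact (card Bset)" using N'pos by (intro dvd_fact) auto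
  then obtain t where t: "fact (card Bset) = nat N' * t" by (auto elim: dvdE)
  have rN: "real N = real_of_int N' * real_of_int d"
  proof -
    have "real N = real_of_int (int N)" by simp
    also have "\<dots> = real_of_int (N' * d)" using Na(1) by simp
    finally show ?thesis by simp
  qed
  have ra: "real_of_int (int e * a) = real e * real_of_int a' * real_of_int d" using Na(2) by simp
  have "gINF G P D h = real_of_int (int e * a) / real N" using gINF_formula[OF h N hN] .
  also have "\<dots> = (real e * real_of_int a' * real_of_int d) / (real_of_int N' * real_of_int d)" by (simp only: rN ra)
  also have "\<dots> = real e * real_of_int a' / real_of_int N'" using dpos by simp
  finally have gi: "gINF G P D h = real e * real_of_int a' / real_of_int N'" .
  have rf: "real (fact (card Bset)) = real_of_int N' * real t"
  proof -
    have "real (fact (card Bset)) = real (nat N' * t)" using t by (metis of_nat_fact)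
    also have "\<dots> = real (nat N') * real t" by simp
    also have "real (nat N') = real_of_int N'" using N'pos by simp
    finally show ?thesis .
  qed
  have "gINF G P D h * real (fact (card Bset)) = real e * real_of_int (a' * int t)"
    using gi rf N'pos by simp
  then show ?thesis by blast
qed


lemma main2:
  assumes sub: "subgroup H G"
    and comm: "\<forall>a\<in>H. \<forall>b\<in>H. a \<otimes> b = b \<otimes> a"
    and per: "\<forall>h\<in>H. periodic G D h"
  shows "(\<forall>h\<in>H. gINF G P D h \<in> \<rat>)
    \<and> (\<forall>g\<in>H. \<forall>h\<in>H. gINF G P D (g \<otimes> h) = gINF G P D g + gINF G P D h)
    \<and> inj_on (gINF G P D) H
    \<and> (\<exists>h\<in>H. H = generate G {h})"
proof -
  have HG: "H \<subseteq> carrier G" by (rule subgroup.subset[OF sub])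
  have invH: "h \<in> H \<Longrightarrow> inv h \<in> H" for h by (rule subgroup.m_inv_closed[OF sub])
  have mH: "a \<in> H \<Longrightarrow> b \<in> H \<Longrightarrow> a \<otimes> b \<in> H" for a b by (rule subgroup.m_closed[OF sub])
  have PP: "\<exists>N::nat. N > 0 \<and> (\<exists>a::int. h [^] N = D [^] (int e * a))" if h: "h \<in> H" for h
  proof -
    have hG: "h \<in> carrier G" using h HG by blast
    show ?thesis by (rule periodic_pow[OF hG bspec[OF per h]])
  qed
  have common: "\<exists>N::nat. N > 0 \<and> (\<exists>c1::int. \<exists>c2::int. g [^] N = D [^] c1 \<and> h [^] N = D [^] c2)"
    if g: "g \<in> H" and h: "h \<in> H" for g h
  proof -
    obtain N1 :: nat and a where A: "N1 > 0" "g [^] N1 = D [^] (int e * a)" using PP[OF g] by blast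
    obtain N2 :: nat and b where B: "N2 > 0" "h [^] N2 = D [^] (int e * b)" using PP[OF h] by blast
    have gG: "g \<in> carrier G" and hG: "h \<in> carrier G" using g h HG by auto
    have g1: "g [^] (N1 * N2) = D [^] (int e * a * int N2)" by (rule pow_scale[OF gG A(2)])
    have "h [^] (N2 * N1) = D [^] (int e * b * int N1)" by (rule pow_scale[OF hG B(2)])
    then have h1: "h [^] (N1 * N2) = D [^] (int e * b * int N1)" by (simp only: mult.commute[of N1 N2])
    have pos: "N1 * N2 > 0" using A B by simp
    show ?thesis
      apply (rule exI[of _ "N1 * N2"])
      apply (rule conjI[OF pos])
      apply (rule exI[of _ "int e * a * int N2"])
      apply (rule exI[of _ "int e * b * int N1"])
      using g1 h1 by (rule conjI)
  qed
  have rat: "\<forall>h\<in>H. gINF G P D h \<in> \<rat>"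
  proof
    fix h assume h: "h \<in> H"
    obtain N :: nat and a where A: "N > 0" "h [^] N = D [^] (int e * a)" using PP[OF h] by blast
    have "gINF G P D h = real_of_int (int e * a) / real N" using gINF_formula[OF _ A] h HG by auto
    then show "gINF G P D h \<in> \<rat>" by simp
  qed
  have hom: "gINF G P D (g \<otimes> h) = gINF G P D g + gINF G P D h" if g: "g \<in> H" and h: "h \<in> H" for g h
  proof -
    obtain N :: nat and c1 c2 :: int where C: "N > 0" "g [^] N = D [^] c1" "h [^] N = D [^] c2"
      using common[OF g h] by blast
    have gG: "g \<in> carrier G" and hG: "h \<in> carrier G" using g h HG by auto
    have cgh: "g \<otimes> h = h \<otimes> g" using comm g h by blast
    have "(g \<otimes> h) [^] N = g [^] N \<otimes> h [^] N" by (rule pow_mult_distrib[OF cgh gG hG])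
    also have "\<dots> = D [^] (c1 + c2)" using C int_pow_mult[OF DG, of c1 c2] by simp
    finally have "(g \<otimes> h) [^] N = D [^] (c1 + c2)" .
    then have "gINF G P D (g \<otimes> h) = real_of_int (c1 + c2) / real N" using gINF_formula[of "g \<otimes> h" N] C gG hG by simp
    moreover have "gINF G P D g = real_of_int c1 / real N" using gINF_formula[OF gG C(1,2)] .
    moreover have "gINF G P D h = real_of_int c2 / real N" using gINF_formula[OF hG C(1,3)] .
    ultimately show ?thesis by (simp add: add_divide_distrib)
  qed
  have inj: "inj_on (gINF G P D) H"
  proof (rule inj_onI)
    fix g h assume g: "g \<in> H" and h: "h \<in> H" and eq: "gINF G P D g = gINF G P D h"
    obtain N :: nat and c1 c2 :: int where C: "N > 0" "g [^] N = D [^] c1" "h [^] N = D [^] c2"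
      using common[OF g h] by blast
    have gG: "g \<in> carrier G" and hG: "h \<in> carrier G" using g h HG by auto
    have "real_of_int c1 / real N = real_of_int c2 / real N"
      using eq gINF_formula[OF gG C(1,2)] gINF_formula[OF hG C(1,3)] by simp
    then have "c1 = c2" using C(1) by simp
    then have gh: "g [^] N = h [^] N" using C by simp
    have ihG: "inv h \<in> carrier G" using hG by simp
    have cgh: "g \<otimes> inv h = inv h \<otimes> g" using comm g invH[OF h] by blast
    have "(g \<otimes> inv h) [^] N = g [^] N \<otimes> (inv h) [^] N" by (rule pow_mult_distrib[OF cgh gG ihG])
    also have "(inv h) [^] N = inv (h [^] N)" using nat_pow_inv[OF hG] .
    also have "g [^] N \<otimes> inv (h [^] N) = \<one>" using gh hG by simp
    finally have "(g \<otimes> inv h) [^] N = \<one>" .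
    moreover have "g \<otimes> inv h \<in> carrier G" using gG ihG by simp
    ultimately have "g \<otimes> inv h = \<one>" using torsion_free C(1) by blast
    then have "inv (inv h) = g" using gG ihG by (intro inv_equality) auto
    then show "g = h" using hG by simp
  qed
  define K where "K = real (fact (card Bset))"
  have Kpos: "K > 0" by (simp add: K_def)
  have epos: "real e > 0" using e_pos by simp
  define \<phi> where "\<phi> h = \<lfloor>gINF G P D h * K / real e\<rfloor>" for h
  have \<phi>r: "real_of_int (\<phi> h) = gINF G P D h * K / real e" if h: "h \<in> H" for h
  proof -
    obtain N :: nat and a where A: "N > 0" "h [^] N = D [^] (int e * a)" using PP[OF h] by blast
    have hG: "h \<in> carrier G" using h HG by blast
    obtain z :: int where z: "gINF G P D h * K = real e * real_of_int z"
      using den_bound[OF hG A] unfolding K_def by blast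
    then have "gINF G P D h * K / real e = real_of_int z" using epos by simp
    then show ?thesis by (simp add: \<phi>_def)
  qed
  have \<phi>hom: "\<phi> (a \<otimes> b) = \<phi> a + \<phi> b" if a: "a \<in> H" and b: "b \<in> H" for a b
  proof -
    have "real_of_int (\<phi> (a \<otimes> b)) = real_of_int (\<phi> a + \<phi> b)"
      using \<phi>r[OF mH[OF a b]] \<phi>r[OF a] \<phi>r[OF b] hom[OF a b] by (simp add: add_divide_distrib distrib_right)
    then show ?thesis by (simp only: of_int_eq_iff)
  qed
  have \<phi>inj: "inj_on \<phi> H"
  proof (rule inj_onI)
    fix a b assume a: "a \<in> H" and b: "b \<in> H" and eq: "\<phi> a = \<phi> b"
    have "gINF G P D a * K / real e = gINF G P D b * K / real e" using \<phi>r[OF a] \<phi>r[OF b] eq by metis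
    then have "gINF G P D a = gINF G P D b" using Kpos epos by (simp add: field_simps)
    then show "a = b" using inj_onD[OF inj _ a b] by simp
  qed
  have cyc: "\<exists>h\<in>H. H = generate G {h}" using cyclic_of_int_hom[OF sub \<phi>hom \<phi>inj] by blast
  show ?thesis using rat hom inj cyc by blast
qed


end

context gar
begin

lemma trivial_case: assumes D1: "D = \<one>" and sub: "subgroup H G"
  shows "(\<forall>h\<in>H. gINF G P D h \<in> \<rat>)
    \<and> (\<forall>g\<in>H. \<forall>h\<in>H. gINF G P D (g \<otimes> h) = gINF G P D g + gINF G P D h)
    \<and> inj_on (gINF G P D) H
    \<and> (\<exists>h\<in>H. H = generate G {h})"
proof -
  have S1: "s = \<one>" if s: "s \<in> S" for s
  proof -
    obtain t where t: "t \<in> P" "s \<otimes> t = D" using s by (auto simp: S_def lprefix_def)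
    then show ?thesis using pos_unit[OF S_P[OF s] t(1)] D1 by simp
  qed
  have P1: "p = \<one>" if p: "p \<in> P" for p
  proof -
    obtain xs where xs: "set xs \<subseteq> S" "p = foldr (\<otimes>) xs \<one>" using S_gen p by (auto simp: S_def)
    have "foldr (\<otimes>) xs \<one> = \<one>" using xs(1) by (induction xs) (auto simp: S1)
    then show ?thesis using xs by simp
  qed
  have G1: "g = \<one>" if g: "g \<in> carrier G" for g
  proof -
    have "g \<in> generate G P" using g gen by simp
    then show ?thesis
      by (induction g rule: generate.induct) (auto simp: P1)
  qed
  have HG: "H \<subseteq> carrier G" by (rule subgroup.subset[OF sub])
  have oneH: "\<one> \<in> H" by (rule subgroup.one_closed[OF sub])
  have H1: "H = {\<one>}" using HG G1 oneH by blast
  have INF1: "gINF G P D \<one> = 0"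
  proof -
    have "(\<lambda>n::nat. real_of_int (ginf G P D (\<one> [^] n)) / real n) = (\<lambda>n. real_of_int (ginf G P D \<one>) / real n)"
      by simp
    moreover have "(\<lambda>n. real_of_int (ginf G P D \<one>) / real n) \<longlonglongrightarrow> 0" by (rule lim_const_over_n)
    ultimately show ?thesis unfolding gINF_def by (simp add: limI)
  qed
  have "generate G {\<one>} = {\<one>}" using generate_pow[of \<one>] by simp
  then show ?thesis using H1 INF1 by auto
qed

end

theorem mainTheorem8:
  fixes G :: "('a, 'b) monoid_scheme" and P :: "'a set" and D :: 'a and H :: "'a set"
  assumes "garside_group G P D"
    and "subgroup H G"
    and "\<forall>a\<in>H. \<forall>b\<in>H. a \<otimes>\<^bsub>G\<^esub> b = b \<otimes>\<^bsub>G\<^esub> a"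
    and "\<forall>h\<in>H. periodic G D h"
  shows "(\<forall>h\<in>H. gINF G P D h \<in> \<rat>)
    \<and> (\<forall>g\<in>H. \<forall>h\<in>H. gINF G P D (g \<otimes>\<^bsub>G\<^esub> h) = gINF G P D g + gINF G P D h)
    \<and> inj_on (gINF G P D) H
    \<and> (\<exists>h\<in>H. H = generate G {h})"
proof -
  from assms(1) obtain \<nu> :: "'a \<Rightarrow> nat" where
    nu: "\<forall>a\<in>P. a \<noteq> \<one>\<^bsub>G\<^esub> \<longrightarrow> \<nu> a > 0" "\<forall>a\<in>P. \<forall>b\<in>P. \<nu> (a \<otimes>\<^bsub>G\<^esub> b) \<ge> \<nu> a + \<nu> b"
    unfolding garside_group_def by blast
  have f: "group G" "P \<subseteq> carrier G" "\<one>\<^bsub>G\<^esub> \<in> P" "\<forall>a\<in>P. \<forall>b\<in>P. a \<otimes>\<^bsub>G\<^esub> b \<in> P"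
    "carrier G = generate G P" "is_lattice_on P (lprefix G P)" "D \<in> P"
    "{a\<in>P. lprefix G P a D} = {a\<in>P. rsuffix G P a D}" "finite {a\<in>P. lprefix G P a D}"
    "\<forall>x\<in>P. \<exists>xs. set xs \<subseteq> {a\<in>P. lprefix G P a D} \<and> x = foldr (\<otimes>\<^bsub>G\<^esub>) xs \<one>\<^bsub>G\<^esub>"
    using assms(1) unfolding garside_group_def by blast+
  interpret gar G P D \<nu>
    by (rule gar.intro[OF f(1)], rule gar_axioms.intro) (use f nu in blast)+
  obtain e :: nat where e: "e > 0" "\<forall>g\<in>carrier G. D [^]\<^bsub>G\<^esub> e \<otimes>\<^bsub>G\<^esub> g = g \<otimes>\<^bsub>G\<^esub> D [^]\<^bsub>G\<^esub> e"
    using central_exists by blast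
  show ?thesis
  proof (cases "D = \<one>\<^bsub>G\<^esub>")
    case True
    then show ?thesis using trivial_case assms(2) by blast
  next
    case False
    interpret gar2 G P D \<nu> e
      by (rule gar2.intro, unfold_locales) (use e False in blast)+
    show ?thesis using main2 assms(2,3,4) by blast
  qed
qed

end
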